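(* Let $(S,\mathcal C)$ be a connectoid and $T$ a rooted undirected tree with $V(T)\subseteq S$. Then $T$ is a weak normal tree of $(S,\mathcal C)$ if and only if $K_t^T\cap V(T)=\mathrm{Up}_T(t)$ for every $t\in V(T)$. Furthermore, if $T$ is a weak normal tree with $V(T)=S$, then $K_t^T=\mathrm{Up}_T(t)$ for every $t\in V(T)$.
   Context: A connectoid is given by a set $S$ and a set $\mathcal F$ of finite subsets of $S$ such that (i) $F\cup F'\in\mathcal F$ whenever $F,F'\in\mathcal F$ and $F\cap F'\neq\emptyset$, and (ii) $\emptyset\in\mathcal F$ and $\{s\}\in\mathcal F$ for every $s\in S$. A set $C\subseteq S$ is connected if for all $x,y\in C$ there is $F\in\mathcal F$ with $F\subseteq C$ and $x,y\in F$; $\mathcal C$ is the set of connected sets. For $S'\subseteq S$, a component of $S'$ is a maximal connected subset of $S'$, and $\mathcal K(S')$ is the set of components of $S'$. For a rooted tree $T$ with tree order $\le_T$ (root is the minimum) and $t\in V(T)$: $\mathrm{Up}_T(t)=\{x\in V(T):t\le_T x\}$, $\mathrm{Down}^\circ_T(t)=\{x\in V(T):x<_T t\}$, and $K_t^T$ denotes the element of $\mathcal K(S\setminus\mathrm{Down}^\circ_T(t))$ containing $t$. A weak normal tree of $(S,\mathcal C)$ is a rooted undirected tree $T$ with $V(T)\subseteq S$ such that (1) for every $C\in\mathcal C$ and every two $\le_T$-incomparable $u,v\in C\cap V(T)$ there is $w\in C$ with $w\le_T u$ and $w\le_T v$, and (2) for all $u\le_T v$ in $V(T)$ there is $C\in\mathcal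 C$ containing $u$ and $v$ with $C\cap\mathrm{Down}^\circ_T(u)=\emptyset$. *)

theory Defs
  imports Main
begin

definition connectoid :: "'a set \<Rightarrow> 'a set set \<Rightarrow> bool" where
  "connectoid S \<F> \<longleftrightarrow>
     (\<forall>F\<in>\<F>. finite F \<and> F \<subseteq> S) \<and>
     (\<forall>F\<in>\<F>. \<forall>F'\<in>\<F>. F \<inter> F' \<noteq> {} \<longrightarrow> F \<union> F' \<in> \<F>) \<and>
     {} \<in> \<F> \<and> (\<forall>s\<in>S. {s} \<in> \<F>)"

text \<open>Connected sets of the connectoid (the set \<open>\<C>\<close>).\<close>
definition conn_set :: "'a set \<Rightarrow> 'a set set \<Rightarrow> 'a set \<Rightarrow> bool" where
  "conn_set S \<F> C \<longleftrightarrow> C \<subseteq> S \<and>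
     (\<forall>x\<in>C. \<forall>y\<in>C. \<exists>F\<in>\<F>. F \<subseteq> C \<and> x \<in> F \<and> y \<in> F)"

definition components_of :: "'a set \<Rightarrow> 'a set set \<Rightarrow> 'a set \<Rightarrow> 'a set set" where
  "components_of S \<F> S' = {K. K \<subseteq> S' \<and> conn_set S \<F> K \<and>
       (\<forall>K'. K \<subseteq> K' \<and> K' \<subseteq> S' \<and> conn_set S \<F> K' \<longrightarrow> K' = K)}"

definition comp_containing :: "'a set \<Rightarrow> 'a set set \<Rightarrow> 'a set \<Rightarrow> 'a \<Rightarrow> 'a set" where
  "comp_containing S \<F> S' t = (THE K. K \<in> components_of S \<F> S' \<and> t \<in> K)"

definition is_graph :: "'a set \<Rightarrow> 'a set set \<Rightarrow> bool" where
  "is_graph V E \<longleftrightarrow> (\<forall>e\<in>E. \<exists>u v. e = {u, v} \<and> u \<noteq> v \<and> u \<in> V \<and> v \<in> V)"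

definition is_path :: "'a set \<Rightarrow> 'a set set \<Rightarrow> 'a \<Rightarrow> 'a \<Rightarrow> 'a list \<Rightarrow> bool" where
  "is_path V E x y p \<longleftrightarrow> p \<noteq> [] \<and> hd p = x \<and> last p = y \<and> distinct p \<and> set p \<subseteq> V \<and>
     (\<forall>i. Suc i < length p \<longrightarrow> {p ! i, p ! Suc i} \<in> E)"

definition is_cycle :: "'a set \<Rightarrow> 'a set set \<Rightarrow> 'a list \<Rightarrow> bool" where
  "is_cycle V E c \<longleftrightarrow> length c \<ge> 3 \<and> distinct c \<and> set c \<subseteq> V \<and>
     (\<forall>i. Suc i < length c \<longrightarrow> {c ! i, c ! Suc i} \<in> E) \<and> {last c, hd c} \<in> E"

definition is_tree :: "'a set \<Rightarrow> 'a set set \<Rightarrow> bool" where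
  "is_tree V E \<longleftrightarrow> is_graph V E \<and> V \<noteq> {} \<and>
     (\<forall>x\<in>V. \<forall>y\<in>V. \<exists>p. is_path V E x y p) \<and> (\<nexists>c. is_cycle V E c)"

definition rooted_tree :: "'a set \<Rightarrow> 'a set set \<Rightarrow> 'a \<Rightarrow> bool" where
  "rooted_tree V E r \<longleftrightarrow> is_tree V E \<and> r \<in> V"

definition tree_le :: "'a set \<Rightarrow> 'a set set \<Rightarrow> 'a \<Rightarrow> 'a \<Rightarrow> 'a \<Rightarrow> bool" where
  "tree_le V E r x y \<longleftrightarrow> (\<exists>p. is_path V E r y p \<and> x \<in> set p)"

definition Up :: "'a set \<Rightarrow> 'a set set \<Rightarrow> 'a \<Rightarrow> 'a \<Rightarrow> 'a set" where
  "Up V E r t = {x\<in>V. tree_le V E r t x}"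

definition Down_strict :: "'a set \<Rightarrow> 'a set set \<Rightarrow> 'a \<Rightarrow> 'a \<Rightarrow> 'a set" where
  "Down_strict V E r t = {x\<in>V. tree_le V E r x t \<and> x \<noteq> t}"

definition K_T :: "'a set \<Rightarrow> 'a set set \<Rightarrow> 'a set \<Rightarrow> 'a set set \<Rightarrow> 'a \<Rightarrow> 'a \<Rightarrow> 'a set" where
  "K_T S \<F> V E r t = comp_containing S \<F> (S - Down_strict V E r t) t"

definition weak_normal_tree :: "'a set \<Rightarrow> 'a set set \<Rightarrow> 'a set \<Rightarrow> 'a set set \<Rightarrow> 'a \<Rightarrow> bool" where
  "weak_normal_tree S \<F> V E r \<longleftrightarrow>
     rooted_tree V E r \<and> V \<subseteq> S \<and>
     (\<forall>C. conn_set S \<F> C \<longrightarrow>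
        (\<forall>u\<in>C \<inter> V. \<forall>v\<in>C \<inter> V.
           \<not> tree_le V E r u v \<and> \<not> tree_le V E r v u \<longrightarrow>
           (\<exists>w\<in>C. tree_le V E r w u \<and> tree_le V E r w v))) \<and>
     (\<forall>u\<in>V. \<forall>v\<in>V. tree_le V E r u v \<longrightarrow>
        (\<exists>C. conn_set S \<F> C \<and> u \<in> C \<and> v \<in> C \<and> C \<inter> Down_strict V E r u = {}))"

end

theory Submission
  imports Defs
begin

fun walk :: "'a set set \<Rightarrow> 'a list \<Rightarrow> bool" where
  "walk E [] = True"
| "walk E [x] = True"
| "walk E (x#y#xs) = ({x,y} \<in> E \<and> walk E (y#xs))"

lemma all_nat_split: "(\<forall>i::nat. P i) \<longleftrightarrow> P 0 \<and> (\<forall>i. P (Suc i))"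
  by (metis nat.exhaust)

lemma walk_nth: "walk E p \<longleftrightarrow> (\<forall>i. Suc i < length p \<longrightarrow> {p!i, p!Suc i} \<in> E)"
proof (induction E p rule: walk.induct)
  case (3 E x y xs)
  show ?case
    apply (subst all_nat_split)
    using 3 by simp
qed auto

lemma walk_Cons: "walk E (x#xs) \<longleftrightarrow> walk E xs \<and> (xs \<noteq> [] \<longrightarrow> {x, hd xs} \<in> E)"
  by (cases xs) auto

lemma walk_append: "walk E (xs @ ys) \<longleftrightarrow> walk E xs \<and> walk E ys \<and> (xs \<noteq> [] \<longrightarrow> ys \<noteq> [] \<longrightarrow> {last xs, hd ys} \<in> E)"
  by (induction xs) (auto simp: walk_Cons)

lemma walk_rev: "walk E (rev xs) \<longleftrightarrow> walk E xs"
  by (induction xs) (auto simp: walk_append walk_Cons last_rev insert_commute)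

lemma is_cycle_walk: "is_cycle V E c \<longleftrightarrow> length c \<ge> 3 \<and> distinct c \<and> set c \<subseteq> V \<and> walk E c \<and> {last c, hd c} \<in> E"
  by (simp add: is_cycle_def walk_nth)

lemma is_path_walk: "is_path V E x y p \<longleftrightarrow> p \<noteq> [] \<and> hd p = x \<and> last p = y \<and> distinct p \<and> set p \<subseteq> V \<and> walk E p"
  by (simp add: is_path_def walk_nth)

lemma path_unique:
  assumes nocyc: "\<nexists>c. is_cycle V E c"
  shows "walk E p \<Longrightarrow> distinct p \<Longrightarrow> set p \<subseteq> V \<Longrightarrow> p \<noteq> [] \<Longrightarrow>
         walk E q \<Longrightarrow> distinct q \<Longrightarrow> set q \<subseteq> V \<Longrightarrow> q \<noteq> [] \<Longrightarrow>
         hd p = hd q \<Longrightarrow> last p = last q \<Longrightarrow> p = q"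
proof (induction p arbitrary: q)
  case Nil
  then show ?case by simp
next
  case (Cons a p')
  obtain q' where q: "q = a # q'" using Cons.prems by (cases q) auto
  show ?case
  proof (cases "p' = []")
    case True
    have "q' = []"
    proof (rule ccontr)
      assume "q' \<noteq> []"
      hence "last q' \<in> set q'" "last q = last q'" using q by auto
      moreover have "a \<notin> set q'" using Cons.prems q by simp
      ultimately show False using Cons.prems True by simp
    qed
    then show ?thesis using True q by simp
  next
    case False
    have q'ne: "q' \<noteq> []"
    proof
      assume "q' = []"
      hence "last p' = a" using Cons.prems q False by simp
      moreover have "last p' \<in> set p'" using False by simp
      ultimately show False using Cons.prems by simp
    qed
    have wp': "walk E p'" and wq': "walk E q'" using Cons.prems q by (auto simp: walk_Cons)
    have lastpq: "last p' = last q'" using Cons.prems q False q'ne by simp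
    show ?thesis
    proof (cases "hd p' = hd q'")
      case True
      have "p' = q'"
        using Cons.IH[of q'] Cons.prems q wp' wq' False q'ne True lastpq by simp
      then show ?thesis using q by simp
    next
      case hdne: False
      have "\<exists>z\<in>set p'. z \<in> set q'" using lastpq False q'ne
        by (metis last_in_set)
      then obtain xs z ys where p'eq: "p' = xs @ z # ys" and zq: "z \<in> set q'"
        and xsq: "\<forall>y\<in>set xs. y \<notin> set q'"
        using split_list_first_prop[of p' "\<lambda>z. z \<in> set q'"] by blast
      obtain us vs where q'eq: "q' = us @ z # vs" using zq split_list by metis
      define c where "c = a # xs @ z # rev us"
      have len: "length c \<ge> 3"
      proof -
        have "xs \<noteq> [] \<or> us \<noteq> []" using hdne p'eq q'eq by auto
        then show ?thesis unfolding c_def by (auto simp: Suc_le_eq)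
      qed
      have dist: "distinct c"
        using Cons.prems q p'eq q'eq xsq unfolding c_def by auto
      have setc: "set c \<subseteq> V"
        using Cons.prems q p'eq q'eq unfolding c_def by auto
      have hdp: "hd (xs @ z # rev us) = hd p'" using p'eq by (cases xs) auto
      have e1: "{a, hd p'} \<in> E" using Cons.prems False by (simp add: walk_Cons)
      have e2: "{a, hd q'} \<in> E" using Cons.prems q q'ne by (simp add: walk_Cons)
      have walkc: "walk E c"
        using wp' wq' e1 hdp unfolding c_def p'eq q'eq
        by (auto simp: walk_append walk_Cons walk_rev hd_rev insert_commute)
      have lastc: "last c = hd q'" unfolding c_def q'eq by (cases us) (auto simp: last_rev)
      have "{last c, hd c} \<in> E" using lastc e2 by (simp add: c_def insert_commute)
      then have "is_cycle V E c" using len dist setc walkc by (simp add: is_cycle_walk)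
      then show ?thesis using nocyc by blast
    qed
  qed
qed

lemma tree_le_V:
  assumes "tree_le V E r x y" shows "x \<in> V" "y \<in> V"
proof -
  obtain p where "is_path V E r y p" "x \<in> set p" using assms unfolding tree_le_def by blast
  then show "x \<in> V" "y \<in> V" unfolding is_path_def by (auto dest: last_in_set)
qed

lemma tree_le_refl:
  assumes "rooted_tree V E r" "t \<in> V" shows "tree_le V E r t t"
proof -
  obtain p where "is_path V E r t p" using assms
    unfolding rooted_tree_def is_tree_def by blast
  then show ?thesis unfolding tree_le_def is_path_def by (metis last_in_set)
qed

lemma tree_le_path:
  assumes "rooted_tree V E r" "is_path V E r y p"
  shows "tree_le V E r x y \<longleftrightarrow> x \<in> set p"
proof
  assume "tree_le V E r x y"
  then obtain q where q: "is_path V E r y q" "x \<in> set q" unfolding tree_le_def by blast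
  have "q = p"
    using path_unique[of V E q p] assms q unfolding rooted_tree_def is_tree_def
    by (simp add: is_path_walk)
  then show "x \<in> set p" using q by simp
next
  assume "x \<in> set p" then show "tree_le V E r x y" using assms unfolding tree_le_def by blast
qed

lemma conn_union:
  assumes cF: "connectoid S F" and A: "conn_set S F A" and B: "conn_set S F B"
    and z: "z \<in> A" "z \<in> B"
  shows "conn_set S F (A \<union> B)"
proof -
  have aux: "\<exists>G\<in>F. G \<subseteq> A \<union> B \<and> x \<in> G \<and> z \<in> G" if "x \<in> A \<union> B" for x
  proof (cases "x \<in> A")
    case True
    then obtain G where "G\<in>F" "G \<subseteq> A" "x \<in> G" "z \<in> G" using A z unfolding conn_set_def by blast
    then show ?thesis by blast
  next
    case False
    then have "x \<in> B" using that by blast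
    then obtain G where "G\<in>F" "G \<subseteq> B" "x \<in> G" "z \<in> G" using B z unfolding conn_set_def by blast
    then show ?thesis by blast
  qed
  show ?thesis unfolding conn_set_def
  proof (intro conjI ballI)
    show "A \<union> B \<subseteq> S" using A B unfolding conn_set_def by blast
  next
    fix x y
    assume xy: "x \<in> A \<union> B" "y \<in> A \<union> B"
    obtain G1 where g1: "G1\<in>F" "G1 \<subseteq> A \<union> B" "x \<in> G1" "z \<in> G1" using aux[OF xy(1)] by blast
    obtain G2 where g2: "G2\<in>F" "G2 \<subseteq> A \<union> B" "y \<in> G2" "z \<in> G2" using aux[OF xy(2)] by blast
    have "G1 \<inter> G2 \<noteq> {}" using g1 g2 by blast
    moreover have "\<forall>F1\<in>F. \<forall>F2\<in>F. F1 \<inter> F2 \<noteq> {} \<longrightarrow> F1 \<union> F2 \<in> F"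
      using cF unfolding connectoid_def by simp
    ultimately have u: "G1 \<union> G2 \<in> F" using g1(1) g2(1) by blast
    have "G1 \<union> G2 \<subseteq> A \<union> B" "x \<in> G1 \<union> G2" "y \<in> G1 \<union> G2" using g1 g2 by auto
    then show "\<exists>G\<in>F. G \<subseteq> A \<union> B \<and> x \<in> G \<and> y \<in> G" using u by blast
  qed
qed

lemma comp_props:
  assumes cF: "connectoid S F" and S': "S' \<subseteq> S" and t: "t \<in> S'"
  shows "t \<in> comp_containing S F S' t" "comp_containing S F S' t \<subseteq> S'"
    "conn_set S F (comp_containing S F S' t)"
    "\<And>C. conn_set S F C \<Longrightarrow> C \<subseteq> S' \<Longrightarrow> t \<in> C \<Longrightarrow> C \<subseteq> comp_containing S F S' t"
proof -
  define U where "U = \<Union>{C. C \<subseteq> S' \<and> conn_set S F C \<and> t \<in> C}"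
  have "{t} \<in> F" using cF S' t unfolding connectoid_def by blast
  then have single: "conn_set S F {t}" using S' t unfolding conn_set_def by blast
  have tU: "t \<in> U" unfolding U_def using single t by blast
  have US': "U \<subseteq> S'" unfolding U_def by blast
  have connU: "conn_set S F U" unfolding conn_set_def
  proof (intro conjI ballI)
    show "U \<subseteq> S" using US' S' by blast
  next
    fix x y assume "x \<in> U" "y \<in> U"
    then obtain C1 C2 where c: "C1 \<subseteq> S'" "conn_set S F C1" "t \<in> C1" "x \<in> C1"
      "C2 \<subseteq> S'" "conn_set S F C2" "t \<in> C2" "y \<in> C2" unfolding U_def by blast
    then have "conn_set S F (C1 \<union> C2)" using conn_union[OF cF] by blast
    then obtain G where "G \<in> F" "G \<subseteq> C1 \<union> C2" "x \<in> G" "y \<in> G"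
      using c unfolding conn_set_def by blast
    moreover have "C1 \<union> C2 \<subseteq> U" unfolding U_def using c by blast
    ultimately show "\<exists>G\<in>F. G \<subseteq> U \<and> x \<in> G \<and> y \<in> G" by blast
  qed
  have Ucomp: "U \<in> components_of S F S'"
  proof -
    have "K' = U" if "U \<subseteq> K'" "K' \<subseteq> S'" "conn_set S F K'" for K'
    proof -
      have "K' \<subseteq> U" unfolding U_def using that tU by blast
      then show ?thesis using that by blast
    qed
    then show ?thesis unfolding components_of_def using US' connU by blast
  qed
  have uniq: "K = U" if "K \<in> components_of S F S' \<and> t \<in> K" for K
  proof -
    have "K \<subseteq> U" using that unfolding U_def components_of_def by blast
    then show ?thesis using that US' connU unfolding components_of_def by blast
  qed
  have eq: "comp_containing S F S' t = U"
    unfolding comp_containing_def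
  proof (rule the_equality)
    show "U \<in> components_of S F S' \<and> t \<in> U" using Ucomp tU by (rule conjI)
  next
    fix K assume "K \<in> components_of S F S' \<and> t \<in> K"
    then show "K = U" by (rule uniq)
  qed
  show "t \<in> comp_containing S F S' t" "comp_containing S F S' t \<subseteq> S'"
    "conn_set S F (comp_containing S F S' t)" unfolding eq using tU US' connU by auto
  show "\<And>C. conn_set S F C \<Longrightarrow> C \<subseteq> S' \<Longrightarrow> t \<in> C \<Longrightarrow> C \<subseteq> comp_containing S F S' t"
    unfolding eq U_def by blast
qed

theorem proposition2p4:
  fixes S :: "'a set" and \<F> :: "'a set set" and V :: "'a set" and E :: "'a set set" and r :: 'a
  assumes "connectoid S \<F>"
    and "rooted_tree V E r"
    and "V \<subseteq> S"
  shows "(weak_normal_tree S \<F> V E r \<longleftrightarrow>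
            (\<forall>t\<in>V. K_T S \<F> V E r t \<inter> V = Up V E r t))
         \<and> (weak_normal_tree S \<F> V E r \<and> V = S \<longrightarrow>
            (\<forall>t\<in>V. K_T S \<F> V E r t = Up V E r t))"
proof -
  note cF = assms(1) and rt = assms(2) and VS = assms(3)
  let ?K = "K_T S \<F> V E r"
  let ?D = "Down_strict V E r"
  have Kt: "t \<in> ?K t" "?K t \<subseteq> S - ?D t" "conn_set S \<F> (?K t)"
    "\<And>C. conn_set S \<F> C \<Longrightarrow> C \<subseteq> S - ?D t \<Longrightarrow> t \<in> C \<Longrightarrow> C \<subseteq> ?K t"
    if tV: "t \<in> V" for t
  proof -
    have "t \<in> S - ?D t" using tV VS unfolding Down_strict_def by blast
    note cp = comp_props[OF cF _ this]
    show "t \<in> ?K t" "?K t \<subseteq> S - ?D t" "conn_set S \<F> (?K t)"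
      unfolding K_T_def using cp by auto
    show "\<And>C. conn_set S \<F> C \<Longrightarrow> C \<subseteq> S - ?D t \<Longrightarrow> t \<in> C \<Longrightarrow> C \<subseteq> ?K t"
      unfolding K_T_def using cp(4) by blast
  qed
  have connS: "C \<subseteq> S" if "conn_set S \<F> C" for C using that unfolding conn_set_def by blast
  have fwd: "?K t \<inter> V = Up V E r t" if wnt: "weak_normal_tree S \<F> V E r" and tV: "t \<in> V" for t
  proof
    show "Up V E r t \<subseteq> ?K t \<inter> V"
    proof
      fix x assume "x \<in> Up V E r t"
      then have xV: "x \<in> V" and le: "tree_le V E r t x" unfolding Up_def by auto
      obtain C where C: "conn_set S \<F> C" "t \<in> C" "x \<in> C" "C \<inter> ?D t = {}"
        using wnt tV xV le unfolding weak_normal_tree_def by blast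
      have "C \<subseteq> S - ?D t" using C connS by blast
      then have "C \<subseteq> ?K t" using Kt(4)[OF tV C(1)] C(2) by blast
      then show "x \<in> ?K t \<inter> V" using C xV by blast
    qed
  next
    show "?K t \<inter> V \<subseteq> Up V E r t"
    proof
      fix x assume x: "x \<in> ?K t \<inter> V"
      have notD: "y \<notin> ?D t" if "y \<in> ?K t" for y using Kt(2)[OF tV] that by blast
      have "tree_le V E r t x"
      proof (cases "tree_le V E r t x")
        case False
        show ?thesis
        proof (cases "tree_le V E r x t")
          case True
          show ?thesis
          proof (cases "x = t")
            case True then show ?thesis using tree_le_refl[OF rt tV] by simp
          next
            case False
            then have "x \<in> ?D t" using True x unfolding Down_strict_def by blast
            then show ?thesis using notD x by blast
          qed
        next
          case nle: False
          have "\<forall>u\<in>?K t \<inter> V. \<forall>v\<in>?K t \<inter> V.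
             \<not> tree_le V E r u v \<and> \<not> tree_le V E r v u \<longrightarrow>
             (\<exists>w\<in>?K t. tree_le V E r w u \<and> tree_le V E r w v)"
            using wnt Kt(3)[OF tV] unfolding weak_normal_tree_def by blast
          moreover have "t \<in> ?K t \<inter> V" using Kt(1)[OF tV] tV by blast
          ultimately obtain w where w: "w \<in> ?K t" "tree_le V E r w t" "tree_le V E r w x"
            using x False nle by blast
          have "w \<in> V" using tree_le_V(1)[OF w(2)] .
          show ?thesis
          proof (cases "w = t")
            case True then show ?thesis using w by simp
          next
            case False
            then have "w \<in> ?D t" using w \<open>w \<in> V\<close> unfolding Down_strict_def by blast
            then show ?thesis using notD w by blast
          qed
        qed
      qed
      then show "x \<in> Up V E r t" using x unfolding Up_def by blast
    qed
  qed
  have bwd: "weak_normal_tree S \<F> V E r" if H: "\<forall>t\<in>V. ?K t \<inter> V = Up V E r t"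
  proof -
    have c1: "\<exists>w\<in>C. tree_le V E r w u \<and> tree_le V E r w v"
      if C: "conn_set S \<F> C" and u: "u \<in> C \<inter> V" and v: "v \<in> C \<inter> V" for C u v
    proof -
      obtain p where p: "is_path V E r u p" using rt u
        unfolding rooted_tree_def is_tree_def by blast
      have "\<exists>z\<in>set p. z \<in> C" using p u unfolding is_path_def by (metis IntD1 last_in_set)
      then obtain ys w zs where pe: "p = ys @ w # zs" and wC: "w \<in> C" and ysC: "\<forall>y\<in>set ys. y \<notin> C"
        using split_list_first_prop[of p "\<lambda>z. z \<in> C"] by blast
      have wu: "tree_le V E r w u" using p pe unfolding tree_le_def by auto
      have wV: "w \<in> V" using tree_le_V(1)[OF wu] .
      have pw: "is_path V E r w (ys @ [w])"
      proof -
        have "walk E p" using p by (simp add: is_path_walk)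
        then have "walk E (ys @ [w])" unfolding pe by (simp add: walk_append)
        moreover have "hd (ys @ [w]) = r" using p pe unfolding is_path_def by (cases ys) auto
        ultimately show ?thesis using p pe by (auto simp: is_path_walk)
      qed
      have "C \<inter> ?D w = {}"
      proof (rule ccontr)
        assume "C \<inter> ?D w \<noteq> {}"
        then obtain y where y: "y \<in> C" "tree_le V E r y w" "y \<noteq> w" unfolding Down_strict_def by blast
        then have "y \<in> set (ys @ [w])" using tree_le_path[OF rt pw] by blast
        then show False using y ysC by auto
      qed
      then have CS: "C \<subseteq> S - ?D w" using connS[OF C] by blast
      have "u \<in> Up V E r w" using wu u unfolding Up_def by blast
      then have uK: "u \<in> ?K w" using H wV by blast
      have "conn_set S \<F> (C \<union> ?K w)" using conn_union[OF cF C Kt(3)[OF wV]] u uK by blast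
      moreover have "C \<union> ?K w \<subseteq> S - ?D w" using CS Kt(2)[OF wV] by blast
      ultimately have "C \<union> ?K w \<subseteq> ?K w" using Kt(4)[OF wV] Kt(1)[OF wV] by blast
      then have "v \<in> ?K w \<inter> V" using v by blast
      then have "tree_le V E r w v" using H wV unfolding Up_def by blast
      then show ?thesis using wC wu by blast
    qed
    have c2: "\<exists>C. conn_set S \<F> C \<and> u \<in> C \<and> v \<in> C \<and> C \<inter> ?D u = {}"
      if u: "u \<in> V" and v: "v \<in> V" and le: "tree_le V E r u v" for u v
    proof -
      have "v \<in> ?K u" using H u v le unfolding Up_def by blast
      then show ?thesis using Kt[OF u] by blast
    qed
    show ?thesis unfolding weak_normal_tree_def
      using rt VS c1 c2 by blast
  qed
  have part3: "\<forall>t\<in>V. ?K t = Up V E r t" if "weak_normal_tree S \<F> V E r" "V = S"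
  proof
    fix t assume tV: "t \<in> V"
    have "?K t \<subseteq> V" using Kt(2)[OF tV] that(2) by blast
    then show "?K t = Up V E r t" using fwd[OF that(1) tV] by blast
  qed
  show ?thesis using fwd bwd part3 by blast
qed

end
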